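(* Let $h$ be a uniformly locally univalent analytic function in $\mathbb{D}$, let $\delta>0$, and suppose there is $z_0\in\mathbb{D}$ with $(1-|z_0|^2)^2|S_h(z_0)|>\delta$. Then there is a constant $c=c(\delta,h)\in(0,1)$, depending only on $\delta$ and $h$ (not on $z_0$), such that $$(1-|z|^2)^2|S_h(z)|>\frac{\delta}{32}\quad\text{for all } z\in B\big(z_0,\,c(1-|z_0|^2)\big),$$ where $B(a,r)$ denotes the Euclidean disk of center $a$ and radius $r$.
   Context: $\mathbb{D}$ is the unit disk and $S_h=(h''/h')'-\frac12(h''/h')^2$ is the Schwarzian derivative of a locally univalent analytic $h$. The hyperbolic distance is $d_h(z,\xi)=\frac12\log\frac{1+p(z,\xi)}{1-p(z,\xi)}$ with $p(z,\xi)=\left|\frac{z-\xi}{1-\overline{\xi}z}\right|$, and $D(a,\rho)$ is the hyperbolic disk of center $a$ and radius $\rho$; $h$ is uniformly locally univalent if there is $\rho\in(0,\infty]$ such that $h$ is univalent on every $D(a,\rho)$, $a\in\mathbb{D}$. *)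

theory Defs
  imports "HOL-Analysis.Analysis"
begin

definition unit_disk :: "complex set" where
  "unit_disk = ball 0 1"

definition schwarzian :: "(complex \<Rightarrow> complex) \<Rightarrow> complex \<Rightarrow> complex" where
  "schwarzian h z =
     deriv (\<lambda>w. deriv (deriv h) w / deriv h w) z
     - (1/2) * (deriv (deriv h) z / deriv h z)\<^sup>2"

definition pseudo_hyp :: "complex \<Rightarrow> complex \<Rightarrow> real" where
  "pseudo_hyp z \<xi> = cmod ((z - \<xi>) / (1 - cnj \<xi> * z))"

definition hyp_dist :: "complex \<Rightarrow> complex \<Rightarrow> real" where
  "hyp_dist z \<xi> = (1/2) * ln ((1 + pseudo_hyp z \<xi>) / (1 - pseudo_hyp z \<xi>))"

text \<open>Hyperbolic disk D(a,rho); rho = infinity (extended real) gives the whole disk.\<close>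
definition hyp_disk :: "complex \<Rightarrow> ereal \<Rightarrow> complex set" where
  "hyp_disk a \<rho> = {z \<in> unit_disk. ereal (hyp_dist z a) < \<rho>}"

definition unif_loc_univalent :: "(complex \<Rightarrow> complex) \<Rightarrow> bool" where
  "unif_loc_univalent h \<longleftrightarrow>
     (\<exists>\<rho>::ereal. 0 < \<rho> \<and> (\<forall>a \<in> unit_disk. inj_on h (hyp_disk a \<rho>)))"

end

theory Submission
  imports Defs "HOL-Complex_Analysis.Complex_Analysis"
begin

lemma schwarzian_eq:
  assumes "f holomorphic_on S" "open S" "a \<in> S" "deriv f a \<noteq> 0"
  shows "schwarzian f a = deriv (deriv (deriv f)) a / deriv f a
            - 3/2 * (deriv (deriv f) a / deriv f a)\<^sup>2"
proof -
  have h1: "(deriv f has_field_derivative deriv (deriv f) a) (at a)"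
    by (rule holomorphic_derivI[OF holomorphic_deriv[OF assms(1,2)] assms(2,3)])
  have h2: "(deriv (deriv f) has_field_derivative deriv (deriv (deriv f)) a) (at a)"
    by (rule holomorphic_derivI[OF holomorphic_deriv[OF holomorphic_deriv[OF assms(1,2)] assms(2)] assms(2,3)])
  have "deriv (\<lambda>w. deriv (deriv f) w / deriv f w) a
     = (deriv (deriv (deriv f)) a * deriv f a - deriv (deriv f) a * deriv (deriv f) a) / (deriv f a * deriv f a)"
    by (rule DERIV_imp_deriv[OF DERIV_divide[OF h2 h1 assms(4)]])
  then have D: "deriv (\<lambda>w. deriv (deriv f) w / deriv f w) a
     = deriv (deriv (deriv f)) a / deriv f a - (deriv (deriv f) a / deriv f a)\<^sup>2"
    using assms(4) by (simp add: field_simps power2_eq_square)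
  show ?thesis unfolding schwarzian_def D by (simp add: field_simps)
qed

lemma hyp_ball:
  assumes "0 < \<rho>"
  obtains t::real where "0<t" "t \<le> 1/2"
    "\<And>a z. a \<in> unit_disk \<Longrightarrow> z \<in> ball a (t*(1-cmod a)) \<Longrightarrow> z \<in> hyp_disk a \<rho>"
proof -
  obtain r0::real where r0: "0 < r0" "ereal r0 \<le> \<rho>"
  proof (cases \<rho>)
    case (real r) then show ?thesis using assms that[of r] by auto
  next
    case PInf then show ?thesis using that[of 1] by auto
  next
    case MInf then show ?thesis using assms by auto
  qed
  define e where "e = exp (2*r0)"
  have e1: "e > 1" using r0 by (simp add: e_def)
  define s where "s = (e-1)/(e+1)"
  have s0: "0 < s" "s < 1" using e1 by (auto simp: s_def field_simps)
  have se: "(1+s)/(1-s) = e" using e1 by (simp add: s_def field_simps)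
  show ?thesis
  proof (rule that[of "s/2"])
    show "0 < s/2" "s/2 \<le> 1/2" using s0 by auto
    fix a z assume a: "a \<in> unit_disk" and z: "z \<in> ball a (s/2*(1-cmod a))"
    have na: "cmod a < 1" using a by (simp add: unit_disk_def)
    have dz: "cmod (z - a) < s/2*(1-cmod a)" using z by (simp add: dist_norm norm_minus_commute)
    have "cmod z \<le> cmod a + cmod (z-a)" by (metis add.commute diff_add_cancel norm_triangle_ineq)
    hence zlt: "cmod z < cmod a + s/2*(1-cmod a)" using dz by linarith
    have "s/2*(1-cmod a) \<le> (1-cmod a)/2" using mult_right_mono[of "s/2" "1/2" "1-cmod a"] s0 na by simp
    hence zlt2: "1 - cmod z > (1 - cmod a)/2" using zlt by (simp add: field_simps)
    hence zd: "z \<in> unit_disk" using na by (simp add: unit_disk_def)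
    have "cmod (cnj a * z) = cmod a * cmod z" by (simp add: norm_mult)
    also have "\<dots> \<le> cmod z" using na by (simp add: mult_left_le_one_le)
    finally have "1 - cmod z \<le> 1 - cmod (cnj a * z)" by simp
    also have "\<dots> \<le> cmod (1 - cnj a * z)"
      by (metis norm_one norm_triangle_ineq2)
    finally have den: "cmod (1 - cnj a * z) > (1 - cmod a)/2" using zlt2 by linarith
    have p_def: "pseudo_hyp z a = cmod (z-a) / cmod (1 - cnj a * z)"
      by (simp add: pseudo_hyp_def norm_divide)
    have p0: "pseudo_hyp z a \<ge> 0" by (simp add: p_def)
    have "cmod (z-a) / cmod (1 - cnj a * z) \<le> cmod (z-a) / ((1 - cmod a)/2)"
    proof (rule divide_left_mono)
      have "0 < (1 - cmod a)/2" using na by simp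
      moreover have "0 < cmod (1 - cnj a * z)" using den \<open>0 < (1 - cmod a)/2\<close> by linarith
      ultimately show "0 < cmod (1 - cnj a * z) * ((1 - cmod a) / 2)" by (rule mult_pos_pos[rotated])
    qed (use den in auto)
    also have "\<dots> < s/2*(1-cmod a) / ((1 - cmod a)/2)"
      using dz na by (intro divide_strict_right_mono) auto
    also have "\<dots> = s" using na by (simp add: field_simps)
    finally have ps: "pseudo_hyp z a < s" by (simp add: p_def)
    define p where "p = pseudo_hyp z a"
    have "(1+p)/(1-p) < (1+s)/(1-s)"
      using ps p0 s0 unfolding p_def[symmetric] by (simp add: field_simps)
    moreover have "(1+p)/(1-p) > 0" using ps p0 s0 unfolding p_def[symmetric] by simp
    ultimately have "ln ((1+p)/(1-p)) < ln e" using se by simp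
    hence "hyp_dist z a < r0" by (simp add: hyp_dist_def p_def e_def)
    hence "ereal (hyp_dist z a) < \<rho>" using r0 less_le_trans[of "ereal (hyp_dist z a)" "ereal r0" \<rho>] by simp
    then show "z \<in> hyp_disk a \<rho>" using zd by (simp add: hyp_disk_def)
  qed
qed

lemma growth:
  fixes f :: "complex \<Rightarrow> complex"
  assumes hol: "f holomorphic_on ball a R" and inj: "inj_on f (ball a R)" and R: "0 < R"
  shows "\<forall>z \<in> cball a (R/4). cmod (f z - f a)
           \<le> (3/4) * (1 + (exp (pi * exp (pi * 16)))\<^sup>2) * R * cmod (deriv f a)"
proof -
  define E where "E = exp (pi * exp (pi * 16))"
  define d where "d = deriv f a"
  have aR: "a \<in> ball a R" using R by simp
  have d0: "d \<noteq> 0" unfolding d_def by (rule holomorphic_injective_imp_regular[OF hol open_ball inj aR])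
  define \<psi> where "\<psi> = (\<lambda>z. if z = a then deriv f a else (f z - f a) / (z - a))"
  have hol\<psi>: "\<psi> holomorphic_on ball a R" unfolding \<psi>_def by (rule pole_lemma_open[OF hol open_ball])
  have \<psi>nz: "\<psi> z \<noteq> 0" if "z \<in> ball a R" for z
  proof (cases "z = a")
    case True thus ?thesis using d0 by (simp add: \<psi>_def d_def)
  next
    case False
    have "f z \<noteq> f a" using inj that aR False by (meson inj_onD)
    thus ?thesis using False by (simp add: \<psi>_def)
  qed
  define r where "r = 3*R/4"
  have r: "0 < r" "r < R" using R by (auto simp: r_def)
  have sub: "cball a r \<subseteq> ball a R" using r by (simp add: cball_subset_ball_iff)
  have holi: "(\<lambda>z. 1/\<psi> z) holomorphic_on ball a R" using hol\<psi> \<psi>nz by (intro holomorphic_intros) auto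
  have conti: "continuous_on (cball a r) (\<lambda>z. 1/\<psi> z)"
    using holomorphic_on_imp_continuous_on[OF holomorphic_on_subset[OF holi sub]] .
  have "continuous_on (sphere a r) (\<lambda>z. cmod (1/\<psi> z))"
    using continuous_on_subset[OF conti sphere_cball] by (intro continuous_on_norm)
  moreover have "sphere a r \<noteq> {}" using r by simp
  ultimately obtain z1 where z1: "z1 \<in> sphere a r"
      and z1max: "\<forall>y \<in> sphere a r. cmod (1/\<psi> y) \<le> cmod (1/\<psi> z1)"
    using continuous_attains_sup[of "sphere a r" "\<lambda>z. cmod (1/\<psi> z)"] by auto
  have "cmod (1/\<psi> a) \<le> cmod (1/\<psi> z1)"
  proof (rule maximum_modulus_frontier[of "\<lambda>z. 1/\<psi> z" "cball a r"])
    show "(\<lambda>z. 1/\<psi> z) holomorphic_on interior (cball a r)"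
      using holomorphic_on_subset[OF holi] sub ball_subset_cball[of a r] by (metis interior_cball order_trans)
    show "continuous_on (closure (cball a r)) (\<lambda>z. 1/\<psi> z)" using conti by simp
    show "bounded (cball a r)" by simp
    show "\<And>z. z \<in> frontier (cball a r) \<Longrightarrow> cmod (1/\<psi> z) \<le> cmod (1/\<psi> z1)"
      using z1max r by (simp add: frontier_cball)
    show "a \<in> cball a r" using r by simp
  qed
  moreover have "\<psi> a = d" by (simp add: \<psi>_def d_def)
  ultimately have inv: "inverse (cmod d) \<le> inverse (cmod (\<psi> z1))" by (simp add: norm_divide divide_inverse norm_inverse)
  have z1R: "z1 \<in> ball a R" using z1 sub sphere_cball by blast
  have z1ne: "z1 \<noteq> a" using z1 r by auto
  have "cmod (\<psi> z1) \<le> cmod d"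
    using inv \<psi>nz[OF z1R] d0 by simp
  moreover have "f z1 - f a = \<psi> z1 * (z1 - a)" using z1ne by (simp add: \<psi>_def)
  moreover have "cmod (z1 - a) = r" using z1 by (simp add: dist_norm norm_minus_commute)
  ultimately have w0b: "cmod (f z1 - f a) \<le> r * cmod d"
    using r by (simp add: norm_mult mult.commute mult_left_mono)
  define w0 where "w0 = f z1 - f a"
  have w0nz: "w0 \<noteq> 0" using inj z1R aR z1ne by (auto simp: w0_def dest: inj_onD)
  define g where "g = (\<lambda>\<zeta>. a + of_real (R/2) * \<zeta>)"
  have gin: "g \<zeta> \<in> ball a R" and gne: "g \<zeta> \<noteq> z1" if "\<zeta> \<in> cball 0 1" for \<zeta>
  proof -
    have "dist a (g \<zeta>) = R/2 * cmod \<zeta>" using R by (simp add: g_def dist_norm norm_mult)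
    also have "\<dots> \<le> R/2" using that R by (simp add: mult_left_le)
    finally have "dist a (g \<zeta>) < r" using R by (simp add: r_def)
    thus "g \<zeta> \<in> ball a R" using r by simp
    show "g \<zeta> \<noteq> z1" using \<open>dist a (g \<zeta>) < r\<close> z1 by auto
  qed
  have holfg: "(\<lambda>\<zeta>. f (g \<zeta>)) holomorphic_on cball 0 1"
  proof -
    have "(f \<circ> g) holomorphic_on cball 0 1"
    proof (rule holomorphic_on_compose_gen[of g _ f "ball a R"])
      show "g holomorphic_on cball 0 1" unfolding g_def by (intro holomorphic_intros)
      show "g ` cball 0 1 \<subseteq> ball a R" using gin by blast
    qed (rule hol)
    thus ?thesis by (simp add: o_def)
  qed
  define u where "u = (\<lambda>\<zeta>. 1 - (f (g \<zeta>) - f a) / w0)"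
  have holu: "u holomorphic_on cball 0 1" unfolding u_def using holfg w0nz by (intro holomorphic_intros) auto
  have unz: "u \<zeta> \<noteq> 0" if "\<zeta> \<in> cball 0 1" for \<zeta>
  proof
    assume "u \<zeta> = 0"
    hence "f (g \<zeta>) = f z1" using w0nz by (simp add: u_def w0_def field_simps)
    hence "g \<zeta> = z1" using inj gin[OF that] z1R by (meson inj_onD)
    thus False using gne[OF that] by simp
  qed
  obtain q where holq: "q holomorphic_on cball 0 1" and uq: "\<And>\<zeta>. \<zeta> \<in> cball 0 1 \<Longrightarrow> u \<zeta> = q \<zeta> ^ 2"
    using contractible_imp_holomorphic_sqrt[OF holu convex_imp_contractible[OF convex_cball] unz] by blast
  have "u 0 = 1" by (simp add: u_def g_def)
  hence q0: "q 0 ^ 2 = 1" using uq[of 0] by simp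
  define p where "p = (\<lambda>\<zeta>. - q 0 * q \<zeta>)"
  have holp: "p holomorphic_on cball 0 1" unfolding p_def using holq by (intro holomorphic_intros)
  have up: "u \<zeta> = p \<zeta> ^ 2" if "\<zeta> \<in> cball 0 1" for \<zeta>
    using uq[OF that] q0 by (simp add: p_def power_mult_distrib)
  have p0: "p 0 = -1" using q0 by (simp add: p_def power2_eq_square)
  have pnot: "\<not> (p \<zeta> = 0 \<or> p \<zeta> = 1)" if "\<zeta> \<in> cball 0 1" for \<zeta>
  proof
    assume "p \<zeta> = 0 \<or> p \<zeta> = 1"
    then show False
    proof
      assume "p \<zeta> = 0" thus False using up[OF that] unz[OF that] by simp
    next
      assume p1: "p \<zeta> = 1"
      hence "u \<zeta> = 1" using up[OF that] by simp
      hence "f (g \<zeta>) = f a" using w0nz by (simp add: u_def)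
      hence "g \<zeta> = a" using inj gin[OF that] aR by (meson inj_onD)
      hence "\<zeta> = 0" using R by (simp add: g_def)
      thus False using p1 p0 by simp
    qed
  qed
  have pb: "cmod (p \<zeta>) \<le> E" if "cmod \<zeta> \<le> 1/2" for \<zeta>
  proof -
    have "cmod (p \<zeta>) \<le> exp (pi * exp (pi * (2 + 2 * 1 + 12 * (1/2) / (1 - 1/2))))"
      by (rule Schottky[OF holp _ pnot]) (use p0 that in auto)
    moreover have "(2 + 2 * 1 + 12 * (1/2) / (1 - 1/2)) = (16::real)" by simp
    ultimately show ?thesis by (simp add: E_def)
  qed
  show ?thesis unfolding E_def[symmetric] d_def[symmetric]
  proof
    fix z assume z: "z \<in> cball a (R/4)"
    define \<zeta> where "\<zeta> = (z - a) / of_real (R/2)"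
    have gz: "g \<zeta> = z" using R by (simp add: g_def \<zeta>_def field_simps)
    have nR: "cmod (complex_of_real (R/2)) = R/2" using R by (simp only: norm_of_real)
    have "cmod \<zeta> = cmod (z - a) / (R/2)" by (simp only: \<zeta>_def norm_divide nR)
    also have "\<dots> \<le> (R/4) / (R/2)" using z R by (intro divide_right_mono) (auto simp: dist_norm norm_minus_commute)
    also have "\<dots> = 1/2" using R by simp
    finally have \<zeta>12: "cmod \<zeta> \<le> 1/2" .
    hence \<zeta>c: "\<zeta> \<in> cball 0 1" by simp
    have "f z - f a = w0 * (1 - u \<zeta>)" using w0nz gz by (simp add: u_def)
    also have "\<dots> = w0 * (1 - p \<zeta> ^ 2)" using up[OF \<zeta>c] by simp
    finally have eq: "cmod (f z - f a) = cmod w0 * cmod (1 - p \<zeta> ^ 2)" by (simp add: norm_mult)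
    have "cmod (1 - p \<zeta> ^ 2) \<le> 1 + cmod (p \<zeta>) ^ 2"
      by (metis norm_one norm_power norm_triangle_ineq4)
    also have "\<dots> \<le> 1 + E\<^sup>2" using pb[OF \<zeta>12] by (simp add: power_mono)
    finally have b1: "cmod (1 - p \<zeta> ^ 2) \<le> 1 + E\<^sup>2" .
    have "cmod (f z - f a) \<le> (r * cmod d) * (1 + E\<^sup>2)"
      unfolding eq using w0b b1 r by (intro mult_mono) (auto simp: w0_def)
    thus "cmod (f z - f a) \<le> 3 / 4 * (1 + E\<^sup>2) * R * cmod d" by (simp add: r_def algebra_simps)
  qed
qed

lemma kraus:
  fixes f :: "complex \<Rightarrow> complex"
  assumes hol: "f holomorphic_on ball a R" and inj: "inj_on f (ball a R)" and R: "0 < R"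
  shows "cmod (schwarzian f a) \<le>
     (576 * (1 + (exp (pi * exp (pi * 16)))\<^sup>2) + 3/2 * (48 * (1 + (exp (pi * exp (pi * 16)))\<^sup>2))\<^sup>2) / R\<^sup>2"
proof -
  define C where "C = 1 + (exp (pi * exp (pi * 16)))\<^sup>2"
  define d where "d = deriv f a"
  have C: "C > 0" by (simp add: C_def add_pos_nonneg)
  have aR: "a \<in> ball a R" using R by simp
  have d0: "d \<noteq> 0" unfolding d_def by (rule holomorphic_injective_imp_regular[OF hol open_ball inj aR])
  define M where "M = 3/4 * C * R * cmod d"
  have M: "M > 0" using C R d0 by (simp add: M_def)
  have gr: "\<forall>z \<in> cball a (R/4). cmod (f z - f a) \<le> M"
    using growth[OF hol inj R] by (simp add: M_def C_def d_def)
  have sub: "cball a (R/4) \<subseteq> ball a R" using R by (simp add: cball_subset_ball_iff)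
  have bnd: "cmod ((deriv ^^ n) f a) \<le> fact n * (2*M) / (R/4)^n" if "0 < n" for n
  proof (rule Cauchy_higher_deriv_bound)
    show "f holomorphic_on ball a (R/4)" using holomorphic_on_subset[OF hol] sub ball_subset_cball by blast
    show "continuous_on (cball a (R/4)) f"
      using holomorphic_on_imp_continuous_on[OF holomorphic_on_subset[OF hol sub]] .
    show "f w \<in> ball (f a) (2*M)" if "w \<in> ball a (R/4)" for w
    proof -
      have "w \<in> cball a (R/4)" using that by simp
      hence "cmod (f w - f a) \<le> M" using gr by blast
      thus ?thesis using M by (simp add: dist_norm norm_minus_commute)
    qed
  qed (use R that in auto)
  have b2: "cmod (deriv (deriv f) a) \<le> 48 * C * cmod d / R"
  proof -
    have "cmod (deriv (deriv f) a) \<le> fact 2 * (2*M) / (R/4)^2"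
      using bnd[of 2] by (simp add: numeral_2_eq_2)
    also have "\<dots> = 48 * C * cmod d / R" using R by (simp add: M_def field_simps power2_eq_square)
    finally show ?thesis .
  qed
  have b3: "cmod (deriv (deriv (deriv f)) a) \<le> 576 * C * cmod d / R\<^sup>2"
  proof -
    have "cmod (deriv (deriv (deriv f)) a) \<le> fact 3 * (2*M) / (R/4)^3"
      using bnd[of 3] by (simp add: numeral_3_eq_3)
    also have "\<dots> = 576 * C * cmod d / R\<^sup>2" using R by (simp add: M_def field_simps power2_eq_square power3_eq_cube fact_numeral)
    finally show ?thesis .
  qed
  have dp: "cmod d > 0" using d0 by simp
  have x2: "cmod (deriv (deriv f) a / d) \<le> 48 * C / R"
    using b2 dp R by (simp add: norm_divide divide_le_eq field_simps)
  have x3: "cmod (deriv (deriv (deriv f)) a / d) \<le> 576 * C / R\<^sup>2"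
    using b3 dp R by (simp add: norm_divide divide_le_eq field_simps)
  have "schwarzian f a = deriv (deriv (deriv f)) a / d - 3/2 * (deriv (deriv f) a / d)\<^sup>2"
    unfolding d_def by (rule schwarzian_eq[OF hol open_ball aR d0[unfolded d_def]])
  hence "cmod (schwarzian f a) \<le> cmod (deriv (deriv (deriv f)) a / d) + 3/2 * cmod (deriv (deriv f) a / d) ^ 2"
    by (metis (no_types, lifting) norm_triangle_ineq4 norm_mult norm_power norm_divide norm_numeral norm_one
        order_trans order_refl add_left_mono)
  also have "\<dots> \<le> 576 * C / R\<^sup>2 + 3/2 * (48 * C / R)\<^sup>2"
    using x2 x3 by (intro add_mono mult_left_mono power_mono) auto
  also have "\<dots> = (576 * C + 3/2 * (48 * C)\<^sup>2) / R\<^sup>2" using R by (simp add: field_simps power2_eq_square)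
  finally show ?thesis by (simp add: C_def)
qed

lemma schwarz_diff:
  fixes F :: "complex \<Rightarrow> complex"
  assumes hol: "F holomorphic_on ball z0 r" and r: "0 < r" and M: "0 < M"
    and bd: "\<And>w. w \<in> ball z0 r \<Longrightarrow> cmod (F w) \<le> M"
    and z: "z \<in> ball z0 r"
  shows "cmod (F z - F z0) \<le> 3 * M * cmod (z - z0) / r"
proof -
  define g where "g = (\<lambda>\<xi>. (F (z0 + of_real r * \<xi>) - F z0) / of_real (3*M))"
  have inb: "z0 + of_real r * \<xi> \<in> ball z0 r" if "cmod \<xi> < 1" for \<xi>
    using that r by (simp add: dist_norm norm_mult)
  have holg: "g holomorphic_on ball 0 1"
  proof -
    have "(F \<circ> (\<lambda>\<xi>. z0 + of_real r * \<xi>)) holomorphic_on ball 0 1"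
    proof (rule holomorphic_on_compose_gen[of _ _ F "ball z0 r"])
      show "(\<lambda>\<xi>. z0 + of_real r * \<xi>) holomorphic_on ball 0 1" by (intro holomorphic_intros)
      show "(\<lambda>\<xi>. z0 + of_real r * \<xi>) ` ball 0 1 \<subseteq> ball z0 r" using inb by auto
    qed (rule hol)
    thus ?thesis unfolding g_def using M by (intro holomorphic_intros) (auto simp: o_def)
  qed
  have g0: "g 0 = 0" by (simp add: g_def)
  have z0b: "z0 \<in> ball z0 r" using r by simp
  have gl: "cmod (g \<xi>) < 1" if "cmod \<xi> < 1" for \<xi>
  proof -
    have "cmod (F (z0 + of_real r * \<xi>) - F z0) \<le> M + M"
      using bd[OF inb[OF that]] bd[OF z0b] by (metis add_mono norm_triangle_ineq4 order_trans)
    note b = this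
    have nm: "cmod (of_real (3*M) :: complex) = 3*M" using M by simp
    have eqg: "cmod (g \<xi>) = cmod (F (z0 + of_real r * \<xi>) - F z0) / (3*M)"
      by (simp only: g_def norm_divide nm)
    have "cmod (g \<xi>) \<le> (M+M)/(3*M)" unfolding eqg
      by (rule divide_right_mono[OF b]) (use M in simp)
    also have "\<dots> < 1" using M by simp
    finally show ?thesis .
  qed
  define \<xi> where "\<xi> = (z - z0) / of_real r"
  have nr: "cmod (of_real r :: complex) = r" using r by simp
  have n\<xi>: "cmod \<xi> = cmod (z - z0) / r" by (simp only: \<xi>_def norm_divide nr)
  have "cmod (z - z0) < r" using z by (simp add: dist_norm norm_minus_commute)
  hence \<xi>1: "cmod \<xi> < 1" using r by (simp add: n\<xi>)
  have "cmod (g \<xi>) \<le> cmod \<xi>" by (rule Schwarz_Lemma(1)[OF holg g0 gl \<xi>1])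
  moreover have "z0 + of_real r * \<xi> = z" using r by (simp add: \<xi>_def)
  moreover have "cmod (of_real (3*M) :: complex) = 3*M" using M by simp
  ultimately have "cmod (F z - F z0) / (3*M) \<le> cmod (z - z0) / r" by (simp add: g_def norm_divide n\<xi>)
  thus ?thesis using M r by (simp add: field_simps)
qed

theorem mainTheorem5:
  fixes h :: "complex \<Rightarrow> complex" and \<delta> :: real
  assumes "h analytic_on unit_disk"
    and "unif_loc_univalent h"
    and "\<delta> > 0"
    and "\<exists>z0 \<in> unit_disk. (1 - (cmod z0)\<^sup>2)\<^sup>2 * cmod (schwarzian h z0) > \<delta>"
  shows "\<exists>c::real. 0 < c \<and> c < 1 \<and>
           (\<forall>z0 \<in> unit_disk. (1 - (cmod z0)\<^sup>2)\<^sup>2 * cmod (schwarzian h z0) > \<delta> \<longrightarrow>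
              (\<forall>z \<in> ball z0 (c * (1 - (cmod z0)\<^sup>2)).
                  (1 - (cmod z)\<^sup>2)\<^sup>2 * cmod (schwarzian h z) > \<delta> / 32))"
proof -
  have hol: "h holomorphic_on unit_disk"
    using assms(1) analytic_imp_holomorphic by blast
  have openD: "open unit_disk" by (simp add: unit_disk_def)
  obtain \<rho> where \<rho>: "0 < \<rho>" "\<forall>a \<in> unit_disk. inj_on h (hyp_disk a \<rho>)"
    using assms(2) unfolding unif_loc_univalent_def by blast
  obtain t where t: "0 < t" "t \<le> 1/2"
     "\<And>a z. a \<in> unit_disk \<Longrightarrow> z \<in> ball a (t*(1-cmod a)) \<Longrightarrow> z \<in> hyp_disk a \<rho>"
    using hyp_ball[OF \<rho>(1)] by blast
  define K0 where "K0 = (576 * (1 + (exp (pi * exp (pi * 16)))\<^sup>2) + 3/2 * (48 * (1 + (exp (pi * exp (pi * 16)))\<^sup>2))\<^sup>2)"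
  have K0: "K0 > 0" by (simp add: K0_def add_pos_nonneg)
  define N where "N = 4 * K0 / t\<^sup>2"
  have N: "N > 0" using K0 t by (simp add: N_def)
  have locinj: "h holomorphic_on ball a (t*(1-cmod a)) \<and> inj_on h (ball a (t*(1-cmod a))) \<and> 0 < t*(1-cmod a)"
    if a: "a \<in> unit_disk" for a
  proof -
    have sub: "ball a (t*(1-cmod a)) \<subseteq> hyp_disk a \<rho>" using t(3)[OF a] by blast
    have "hyp_disk a \<rho> \<subseteq> unit_disk" by (auto simp: hyp_disk_def)
    with sub have "ball a (t*(1-cmod a)) \<subseteq> unit_disk" by blast
    moreover have "cmod a < 1" using a by (simp add: unit_disk_def)
    ultimately show ?thesis using holomorphic_on_subset[OF hol] inj_on_subset[OF \<rho>(2)[rule_format, OF a] sub] t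
      by auto
  qed
  have dnz: "deriv h a \<noteq> 0" if a: "a \<in> unit_disk" for a
  proof -
    have "a \<in> ball a (t*(1-cmod a))" using locinj[OF a] by simp
    thus ?thesis using locinj[OF a] holomorphic_injective_imp_regular[OF _ open_ball] by blast
  qed
  have Nb: "(1 - (cmod a)\<^sup>2)\<^sup>2 * cmod (schwarzian h a) \<le> N" if a: "a \<in> unit_disk" for a
  proof -
    define R where "R = t*(1-cmod a)"
    have na: "cmod a < 1" using a by (simp add: unit_disk_def)
    have kr: "cmod (schwarzian h a) \<le> K0 / R\<^sup>2"
      using kraus[of h a R] locinj[OF a] by (simp add: R_def K0_def)
    have "(1 - (cmod a)\<^sup>2) = (1 - cmod a) * (1 + cmod a)" by (simp add: power2_eq_square algebra_simps)
    also have "\<dots> \<le> (1 - cmod a) * 2" using na by (intro mult_left_mono) auto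
    finally have "(1 - (cmod a)\<^sup>2) \<le> 2 * (1 - cmod a)" by simp
    moreover have "0 \<le> 1 - (cmod a)\<^sup>2" using na by (simp add: abs_square_le_1 less_imp_le)
    ultimately have sq: "(1 - (cmod a)\<^sup>2)\<^sup>2 \<le> (2 * (1 - cmod a))\<^sup>2" by (intro power_mono) auto
    have "(1 - (cmod a)\<^sup>2)\<^sup>2 * cmod (schwarzian h a) \<le> (2 * (1 - cmod a))\<^sup>2 * (K0 / R\<^sup>2)"
      using sq kr by (intro mult_mono) auto
    also have "\<dots> = N"
    proof -
      have ne: "1 - cmod a \<noteq> 0" using na by simp
      have "(2 * (1 - cmod a))\<^sup>2 * (K0 / R\<^sup>2) = (4 * K0 / t\<^sup>2) * ((1 - cmod a)\<^sup>2 / (1 - cmod a)\<^sup>2)"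
        by (simp only: R_def power_mult_distrib) (simp add: field_simps)
      also have "\<dots> = N" using ne by (simp add: N_def)
      finally show ?thesis .
    qed
    finally show ?thesis .
  qed
  have holS: "schwarzian h holomorphic_on unit_disk"
  proof -
    have h1: "(\<lambda>w. deriv (deriv h) w / deriv h w) holomorphic_on unit_disk"
      using hol openD dnz by (intro holomorphic_intros) auto
    have "(\<lambda>z. deriv (\<lambda>w. deriv (deriv h) w / deriv h w) z
            - (1/2) * (deriv (deriv h) z / deriv h z)\<^sup>2) holomorphic_on unit_disk"
      using holomorphic_deriv[OF h1 openD] h1 hol openD dnz by (intro holomorphic_intros) auto
    thus ?thesis by (simp add: schwarzian_def[abs_def])
  qed
  define c where "c = min (1/8) (\<delta> / (768 * N))"
  have c: "0 < c" "c \<le> 1/8" "c \<le> \<delta> / (768 * N)" using assms(3) N by (auto simp: c_def)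
  show ?thesis
  proof (intro exI conjI ballI impI)
    show "0 < c" "c < 1" using c by auto
    fix z0 z assume z0: "z0 \<in> unit_disk"
      and big: "(1 - (cmod z0)\<^sup>2)\<^sup>2 * cmod (schwarzian h z0) > \<delta>"
      and z: "z \<in> ball z0 (c * (1 - (cmod z0)\<^sup>2))"
    define A where "A = 1 - (cmod z0)\<^sup>2"
    have n0: "cmod z0 < 1" using z0 by (simp add: unit_disk_def)
    have A0: "A > 0" using n0 by (simp add: A_def abs_square_less_1)
    have Aeq: "A = (1 - cmod z0) * (1 + cmod z0)" by (simp add: A_def power2_eq_square algebra_simps)
    have A2: "A \<le> 2 * (1 - cmod z0)" unfolding Aeq
      using n0 mult_left_mono[of "1 + cmod z0" 2 "1 - cmod z0"] by (simp add: mult.commute)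
    define r where "r = (1 - cmod z0)/2"
    have r: "r > 0" using n0 by (simp add: r_def)
    have dz: "cmod (z - z0) < c * A" using z by (simp add: A_def dist_norm norm_minus_commute)
    have dz2: "cmod (z - z0) < (1 - cmod z0)/4"
    proof -
      have "c * A \<le> 1/8 * A" using c A0 by (intro mult_right_mono) auto
      thus ?thesis using dz A2 by (simp add: field_simps)
    qed
    have zr: "z \<in> ball z0 r" using dz2 n0 by (simp add: r_def dist_norm norm_minus_commute field_simps)
    have ballD: "ball z0 r \<subseteq> unit_disk"
    proof
      fix w assume "w \<in> ball z0 r"
      hence "cmod (w - z0) < r" by (simp add: dist_norm norm_minus_commute)
      moreover have "cmod w \<le> cmod z0 + cmod (w - z0)" by (metis add.commute diff_add_cancel norm_triangle_ineq)
      ultimately have "cmod w < cmod z0 + r" by simp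
      thus "w \<in> unit_disk" using n0 by (simp add: unit_disk_def r_def field_simps)
    qed
    have wlow: "1 - (cmod w)\<^sup>2 \<ge> A/4" and wpos: "1 - (cmod w)\<^sup>2 > 0" if w: "w \<in> ball z0 r" for w
    proof -
      have "cmod (w - z0) < r" using w by (simp add: dist_norm norm_minus_commute)
      moreover have "cmod w \<le> cmod z0 + cmod (w - z0)" by (metis add.commute diff_add_cancel norm_triangle_ineq)
      ultimately have lw: "cmod w < cmod z0 + r" by simp
      hence nw: "cmod w < 1" using n0 by (simp add: r_def field_simps)
      have "1 - cmod w \<le> 1 - (cmod w)\<^sup>2"
        using nw by (simp add: power2_eq_square mult_left_le_one_le)
      moreover have "1 - cmod w \<ge> A/4" using lw A2 by (simp add: r_def field_simps)
      ultimately show "1 - (cmod w)\<^sup>2 \<ge> A/4" by linarith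
      thus "1 - (cmod w)\<^sup>2 > 0" using A0 by linarith
    qed
    have Sb: "cmod (schwarzian h w) \<le> 16 * N / A\<^sup>2" if w: "w \<in> ball z0 r" for w
    proof -
      have wD: "w \<in> unit_disk" using w ballD by blast
      have "(A/4)\<^sup>2 \<le> (1 - (cmod w)\<^sup>2)\<^sup>2" using wlow[OF w] A0 by (intro power_mono) auto
      hence "(A/4)\<^sup>2 * cmod (schwarzian h w) \<le> (1 - (cmod w)\<^sup>2)\<^sup>2 * cmod (schwarzian h w)"
        by (intro mult_right_mono) auto
      also have "\<dots> \<le> N" by (rule Nb[OF wD])
      finally show ?thesis using A0 by (simp add: field_simps power2_eq_square)
    qed
    have diff: "cmod (schwarzian h z - schwarzian h z0) \<le> 3 * (16 * N / A\<^sup>2) * cmod (z - z0) / r"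
      by (rule schwarz_diff[OF holomorphic_on_subset[OF holS ballD] r _ Sb zr]) (use N A0 in auto)
    also have "\<dots> \<le> 3 * (16 * N / A\<^sup>2) * (c * A) / (A/4)"
    proof -
      have "A/4 \<le> r" using A2 by (simp add: r_def)
      have m3: "3 * (16 * N / A\<^sup>2) * cmod (z - z0) \<le> 3 * (16 * N / A\<^sup>2) * (c * A)"
        using dz N A0 by (intro mult_left_mono) auto
      have "3 * (16 * N / A\<^sup>2) * cmod (z - z0) / r \<le> 3 * (16 * N / A\<^sup>2) * (c * A) / r"
        by (rule divide_right_mono[OF m3]) (use r in simp)
      also have "\<dots> \<le> 3 * (16 * N / A\<^sup>2) * (c * A) / (A/4)"
        using \<open>A/4 \<le> r\<close> A0 N c by (intro divide_left_mono) auto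
      finally show ?thesis .
    qed
    also have "\<dots> = 192 * N * c / A\<^sup>2" using A0 by (simp add: field_simps power2_eq_square)
    also have "\<dots> \<le> 192 * N * (\<delta> / (768 * N)) / A\<^sup>2" using c N A0
      by (intro divide_right_mono mult_left_mono) auto
    also have "\<dots> = \<delta> / (4 * A\<^sup>2)" using N by (simp add: field_simps)
    finally have diff2: "cmod (schwarzian h z - schwarzian h z0) \<le> \<delta> / (4 * A\<^sup>2)" .
    have "cmod (schwarzian h z0) \<le> cmod (schwarzian h z) + cmod (schwarzian h z - schwarzian h z0)"
      using norm_triangle_ineq4[of "schwarzian h z" "schwarzian h z - schwarzian h z0"] by simp
    hence "A\<^sup>2 * cmod (schwarzian h z0) \<le> A\<^sup>2 * cmod (schwarzian h z) + A\<^sup>2 * (\<delta> / (4 * A\<^sup>2))"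
    proof -
      have "cmod (schwarzian h z0) \<le> cmod (schwarzian h z) + \<delta> / (4 * A\<^sup>2)"
        using \<open>cmod (schwarzian h z0) \<le> _\<close> diff2 by linarith
      hence "A\<^sup>2 * cmod (schwarzian h z0) \<le> A\<^sup>2 * (cmod (schwarzian h z) + \<delta> / (4 * A\<^sup>2))"
        by (rule mult_left_mono) simp
      thus ?thesis by (simp add: distrib_left)
    qed
    also have "A\<^sup>2 * (\<delta> / (4 * A\<^sup>2)) = \<delta>/4" using A0 by simp
    finally have "A\<^sup>2 * cmod (schwarzian h z) > 3 * \<delta> / 4" using big unfolding A_def[symmetric] by simp
    moreover have "(A/4)\<^sup>2 \<le> (1 - (cmod z)\<^sup>2)\<^sup>2" using wlow[OF zr] A0 by (intro power_mono) auto
    ultimately have "(A/4)\<^sup>2 * cmod (schwarzian h z) \<le> (1 - (cmod z)\<^sup>2)\<^sup>2 * cmod (schwarzian h z)"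
      by (intro mult_right_mono) auto
    moreover have "(A/4)\<^sup>2 * cmod (schwarzian h z) = (A\<^sup>2 * cmod (schwarzian h z)) / 16"
      by (simp add: power2_eq_square)
    moreover note \<open>A\<^sup>2 * cmod (schwarzian h z) > 3 * \<delta> / 4\<close>
    ultimately show "(1 - (cmod z)\<^sup>2)\<^sup>2 * cmod (schwarzian h z) > \<delta> / 32" using assms(3) by simp
  qed
qed

end
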